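(* Let $(X,d,\kappa)$ be a digital metric space where $d$ is an $\ell_p$ metric for some $1\le p\le\infty$. Suppose $T:X\to X$ satisfies $d(T(x),T(y))\le\psi(d(x,y))$ for all $x,y\in X$, where $\psi:[0,\infty)\to[0,\infty)$ is monotone nondecreasing and satisfies $\lim_{n\to\infty}\psi^n(t)=0$ for all $t>0$ ($\psi^n$ the $n$-fold composition). Then $T$ has a unique fixed point.
   Context: A digital metric space is a triple $(X,d,\kappa)$ where $X\subset\mathbb{Z}^n$ for some positive integer $n$, $\kappa$ is an adjacency relation on $X$, and $d$ is a metric on $X$. The $\ell_p$ metric on $\mathbb{Z}^n$ is $d(x,y)=(\sum_i|x_i-y_i|^p)^{1/p}$ for $1\le p<\infty$ and $\max_i|x_i-y_i|$ for $p=\infty$. *)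

theory Defs
  imports "HOL-Analysis.Analysis"
begin

text \<open>Points of Z^n are modelled as vectors int ^ 'n, with 'n a finite index type
 (so n = CARD('n) is arbitrary but fixed). The exponent p ranges over [1, infinity],
 modelled as an extended real.\<close>

definition lp_dist :: "ereal \<Rightarrow> int ^ 'n \<Rightarrow> int ^ 'n \<Rightarrow> real" where
  "lp_dist p x y =
     (if p = \<infinity> then Max (range (\<lambda>i. real_of_int \<bar>x $ i - y $ i\<bar>))
      else (\<Sum>i\<in>UNIV. real_of_int \<bar>x $ i - y $ i\<bar> powr real_of_ereal p) powr (1 / real_of_ereal p))"

definition adjacency_relation :: "'a set \<Rightarrow> ('a \<Rightarrow> 'a \<Rightarrow> bool) \<Rightarrow> bool" where
  "adjacency_relation X \<kappa> \<longleftrightarrow>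
     (\<forall>x y. \<kappa> x y \<longrightarrow> x \<in> X \<and> y \<in> X) \<and>
     (\<forall>x y. \<kappa> x y \<longrightarrow> \<kappa> y x) \<and> (\<forall>x. \<not> \<kappa> x x)"

end

theory Submission
  imports Defs
begin

lemma lp_nonneg:
  fixes x y :: "int ^ 'n"
  shows "lp_dist p x y \<ge> 0"
proof (cases "p = \<infinity>")
  case True
  obtain i :: 'n where True by simp
  have "real_of_int \<bar>x $ i - y $ i\<bar> \<le> Max (range (\<lambda>i. real_of_int \<bar>x $ i - y $ i\<bar>))"
    by (rule Max_ge) auto
  moreover have "0 \<le> real_of_int \<bar>x $ i - y $ i\<bar>" by simp
  moreover have "lp_dist p x y = Max (range (\<lambda>i. real_of_int \<bar>x $ i - y $ i\<bar>))"
    using True by (simp add: lp_dist_def)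
  ultimately show ?thesis by linarith
next
  case False
  then show ?thesis by (simp add: lp_dist_def)
qed

lemma lp_zero:
  fixes x :: "int ^ 'n"
  shows "lp_dist p x x = 0"
  by (simp add: lp_dist_def)

lemma lp_ge1:
  fixes x y :: "int ^ 'n"
  assumes "1 \<le> p" "x \<noteq> y"
  shows "lp_dist p x y \<ge> 1"
proof -
  obtain i where i: "x $ i \<noteq> y $ i" using assms(2) by (metis vec_eq_iff)
  have ai: "1 \<le> real_of_int \<bar>x $ i - y $ i\<bar>" using i by linarith
  show ?thesis
  proof (cases "p = \<infinity>")
    case True
    have "real_of_int \<bar>x $ i - y $ i\<bar> \<le> Max (range (\<lambda>i. real_of_int \<bar>x $ i - y $ i\<bar>))"
      by (rule Max_ge) auto
    moreover have "lp_dist p x y = Max (range (\<lambda>i. real_of_int \<bar>x $ i - y $ i\<bar>))"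
      using True by (simp add: lp_dist_def)
    ultimately show ?thesis using ai by linarith
  next
    case False
    define q where "q = real_of_ereal p"
    have q1: "q \<ge> 1" using assms(1) False unfolding q_def
      by (cases p) auto
    have "1 \<le> real_of_int \<bar>x $ i - y $ i\<bar> powr q"
      using ai q1 by (simp add: ge_one_powr_ge_zero)
    also have "\<dots> \<le> (\<Sum>j\<in>UNIV. real_of_int \<bar>x $ j - y $ j\<bar> powr q)"
      by (rule member_le_sum) auto
    finally have s: "1 \<le> (\<Sum>j\<in>UNIV. real_of_int \<bar>x $ j - y $ j\<bar> powr q)" .
    have "1 \<le> (\<Sum>j\<in>UNIV. real_of_int \<bar>x $ j - y $ j\<bar> powr q) powr (1/q)"
      using s q1 by (simp add: ge_one_powr_ge_zero)
    then show ?thesis using False by (simp add: lp_dist_def q_def)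
  qed
qed

theorem theorem8p7:
  fixes X :: "(int ^ 'n) set" and \<kappa> :: "int ^ 'n \<Rightarrow> int ^ 'n \<Rightarrow> bool"
    and p :: ereal and T :: "int ^ 'n \<Rightarrow> int ^ 'n" and \<psi> :: "real \<Rightarrow> real"
  assumes "X \<noteq> {}"
    and "adjacency_relation X \<kappa>"
    and "1 \<le> p"
    and "\<forall>x\<in>X. T x \<in> X"
    and "\<forall>x\<in>X. \<forall>y\<in>X. lp_dist p (T x) (T y) \<le> \<psi> (lp_dist p x y)"
    and "\<forall>t\<ge>0. \<psi> t \<ge> 0"
    and "mono_on {0..} \<psi>"
    and "\<forall>t>0. (\<lambda>n. (\<psi> ^^ n) t) \<longlonglongrightarrow> 0"
  shows "\<exists>!x. x \<in> X \<and> T x = x"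
proof -
  note mono = mono_onD[OF assms(7)]
  have nn: "(\<psi> ^^ n) t \<ge> 0" if "t \<ge> 0" for n t
    using that assms(6) by (induction n) auto
  have lt: "\<psi> t < t" if t: "t > 0" for t
  proof (rule ccontr)
    assume "\<not> \<psi> t < t"
    hence ge: "\<psi> t \<ge> t" by simp
    have "(\<psi> ^^ n) t \<ge> t" for n
    proof (induction n)
      case 0 then show ?case by simp
    next
      case (Suc n)
      have "\<psi> t \<le> \<psi> ((\<psi> ^^ n) t)" using Suc t by (intro mono) auto
      then show ?case using ge by simp
    qed
    moreover have "(\<lambda>n. (\<psi> ^^ n) t) \<longlonglongrightarrow> 0" using assms(8) t by blast
    ultimately have "t \<le> 0" by (intro LIMSEQ_le_const[of _ 0]) auto
    then show False using t by simp
  qed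
  have uniq: "x = y" if "x \<in> X" "y \<in> X" "T x = x" "T y = y" for x y
  proof (rule ccontr)
    assume "x \<noteq> y"
    hence d: "lp_dist p x y \<ge> 1" using lp_ge1 assms(3) by blast
    have "lp_dist p (T x) (T y) \<le> \<psi> (lp_dist p x y)" using assms(5) that(1,2) by blast
    hence "lp_dist p x y \<le> \<psi> (lp_dist p x y)" using that(3,4) by simp
    with lt[of "lp_dist p x y"] d show False by simp
  qed
  obtain x0 where x0: "x0 \<in> X" using assms(1) by blast
  define s where "s n = (T ^^ n) x0" for n
  have sX: "s n \<in> X" for n unfolding s_def using x0 assms(4) by (induction n) auto
  have sS: "s (Suc n) = T (s n)" for n unfolding s_def by simp
  define d0 where "d0 = lp_dist p x0 (T x0)"
  have d0nn: "d0 \<ge> 0" unfolding d0_def by (rule lp_nonneg)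
  have bound: "lp_dist p (s n) (s (Suc n)) \<le> (\<psi> ^^ n) d0" for n
  proof (induction n)
    case 0 then show ?case by (simp add: s_def d0_def)
  next
    case (Suc n)
    have "lp_dist p (s (Suc n)) (s (Suc (Suc n))) \<le> \<psi> (lp_dist p (s n) (s (Suc n)))"
    proof -
      have "lp_dist p (T (s n)) (T (s (Suc n))) \<le> \<psi> (lp_dist p (s n) (s (Suc n)))"
        using assms(5) sX by blast
      then show ?thesis by (simp add: sS)
    qed
    also have "\<dots> \<le> \<psi> ((\<psi> ^^ n) d0)"
      using Suc lp_nonneg nn[OF d0nn] by (intro mono) auto
    finally show ?case by simp
  qed
  have ex: "\<exists>x. x \<in> X \<and> T x = x"
  proof (cases "d0 = 0")
    case True
    have "x0 = T x0"
    proof (rule ccontr)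
      assume "x0 \<noteq> T x0"
      then have "1 \<le> d0" using lp_ge1[OF assms(3), of x0 "T x0"] unfolding d0_def by blast
      with True show False by simp
    qed
    then show ?thesis using x0 by (intro exI[of _ x0]) simp
  next
    case False
    hence "d0 > 0" using d0nn by simp
    hence "(\<lambda>n. (\<psi> ^^ n) d0) \<longlonglongrightarrow> 0" using assms(8) by blast
    hence "eventually (\<lambda>n. (\<psi> ^^ n) d0 < 1) sequentially"
      by (rule order_tendstoD) simp
    then obtain n where "(\<psi> ^^ n) d0 < 1" using eventually_sequentially by auto
    hence "lp_dist p (s n) (s (Suc n)) < 1" using bound[of n] by simp
    hence "s n = s (Suc n)" using lp_ge1[OF assms(3), of "s n" "s (Suc n)"] by linarith
    hence "s n = T (s n)" using sS by simp
    then show ?thesis using sX by (intro exI[of _ "s n"]) simp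
  qed
  show ?thesis using ex uniq by blast
qed

end
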